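(* Let $\sigma=(\beta_l,\beta_h)$ be an arbitrary strategy, $\{\mathcal{I}_N\}$ an arbitrary sequence of instances of the binary voting game, and $\Sigma_N$ the symmetric profile in $\mathcal{I}_N$ in which every agent plays $\sigma$. Let $f=\min(f_H,f_L)$ where $f_H=P_{hH}\beta_h+P_{lH}\beta_l-\mu$ and $f_L=P_{hL}(1-\beta_h)+P_{lL}(1-\beta_l)-(1-\mu)$ (the excess expected vote share of $\Sigma_N$, which does not depend on $N$). If $f>0$ then $\lim_{N\to\infty}A(\Sigma_N)=1$; if $f\le0$ then $A(\Sigma_N)$ does not converge to $1$.
   Context: Binary voting game. An instance has $N$ agents each voting for $\mathbf{A}$ or $\mathbf{R}$. Unobserved world state $W\in\{L,H\}$ with common prior $P_L,P_H>0$. Conditional on $W$, each agent independently receives a signal $S_n\in\{l,h\}$ with $P_{sw}=\Pr[S_n=s\mid W=w]$, $P_{hH}>P_{hL}$, $P_{lH}<P_{lL}$. With threshold $\mu\in(0,1)$, $\mathbf{A}$ wins iff at least $\mu N$ agents vote $\mathbf{A}$, else $\mathbf{R}$ wins. Agents have utilities $v_n:\{L,H\}\times\{\mathbf{A},\mathbf{R}\}\to\{0,\dots,B\}$ with $v_n(H,\mathbf{A})>v_n(L,\mathbf{A})$, $v_n(H,\mathbf{R})<v_n(L,\mathbf{R})$, and are friendly, unfriendly or contingent in fixed proportions $\alpha_F<\mu$, $\alpha_U<1-\mu$, $\alpha_C$ (counts $\lfloor\alpha_FN\rfloor,\lfloor\alpha_UN\rfloor$, rest), so the informed majority decision is $\mathbf{A}$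 in $H$ and $\mathbf{R}$ in $L$. A sequence of instances: $\mathcal{I}_N$ has $N$ agents, all share $\mu$, prior, signal distribution and $\alpha$'s. Strategy $\sigma=(\beta_l,\beta_h)$, $\beta_s$ = probability of voting $\mathbf{A}$ on signal $s$. Fidelity $A(\Sigma)=P_L\lambda^{\mathbf{R}}_L(\Sigma)+P_H\lambda^{\mathbf{A}}_H(\Sigma)$, with $\lambda^{\mathbf{X}}_w(\Sigma)$ the ex-ante probability that $\mathbf{X}$ wins in state $w$. *)

theory Defs
  imports Complex_Main
begin

datatype state = L | H
datatype signal = l | h
datatype outcome = Acc | Rej

text \<open>A (possibly asymmetric) strategy profile in an instance with N agents is
  a function  prof :: nat => signal => real, where  prof n s  is the probability
  that agent n (n < N) votes Acc after receiving signal s.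
  P s w = Pr[S_n = s | W = w].\<close>

definition vote_A_prob :: "(signal \<Rightarrow> state \<Rightarrow> real) \<Rightarrow> (nat \<Rightarrow> signal \<Rightarrow> real) \<Rightarrow> state \<Rightarrow> nat \<Rightarrow> real" where
  "vote_A_prob P prof w n = P h w * prof n h + P l w * prof n l"

text \<open>Ex-ante probability that outcome X wins in state w: conditional on w the
  votes are independent; S is the set of agents voting Acc.\<close>
definition win_prob :: "nat \<Rightarrow> real \<Rightarrow> (signal \<Rightarrow> state \<Rightarrow> real) \<Rightarrow> (nat \<Rightarrow> signal \<Rightarrow> real) \<Rightarrow> outcome \<Rightarrow> state \<Rightarrow> real" where
  "win_prob N \<mu> P prof X w =
     (\<Sum>S\<in>Pow {..<N}.
        if (X = Acc \<longleftrightarrow> real (card S) \<ge> \<mu> * real N)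
        then (\<Prod>n\<in>S. vote_A_prob P prof w n) * (\<Prod>n\<in>{..<N} - S. 1 - vote_A_prob P prof w n)
        else 0)"

definition fidelity :: "nat \<Rightarrow> real \<Rightarrow> (state \<Rightarrow> real) \<Rightarrow> (signal \<Rightarrow> state \<Rightarrow> real) \<Rightarrow> (nat \<Rightarrow> signal \<Rightarrow> real) \<Rightarrow> real" where
  "fidelity N \<mu> Pr P prof = Pr L * win_prob N \<mu> P prof Rej L + Pr H * win_prob N \<mu> P prof Acc H"

definition symmetric_profile :: "real \<Rightarrow> real \<Rightarrow> nat \<Rightarrow> signal \<Rightarrow> real" where
  "symmetric_profile \<beta>l \<beta>h = (\<lambda>n s. case s of l \<Rightarrow> \<beta>l | h \<Rightarrow> \<beta>h)"

end

theory Submission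
  imports Defs
begin


definition Eb :: "real \<Rightarrow> nat \<Rightarrow> (nat \<Rightarrow> real) \<Rightarrow> real" where
  "Eb p N g = (\<Sum>S\<in>Pow {..<N}. p ^ card S * (1 - p) ^ (N - card S) * g (card S))"

lemma card_le_N: "S \<in> Pow {..<N} \<Longrightarrow> card S \<le> N"
  by (metis PowD card_lessThan card_mono finite_lessThan)

lemma Eb_Suc: "Eb p (Suc N) g = p * Eb p N (\<lambda>k. g (Suc k)) + (1 - p) * Eb p N g"
proof -
  define F :: "nat set \<Rightarrow> real" where "F S = p ^ card S * (1 - p) ^ (Suc N - card S) * g (card S)" for S
  have pw: "Pow {..<Suc N} = Pow {..<N} \<union> insert N ` Pow {..<N}"
    by (simp add: lessThan_Suc Pow_insert)
  have disj: "Pow {..<N} \<inter> insert N ` Pow {..<N} = {}" by auto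
  have inj: "inj_on (insert N) (Pow {..<N})"
    by (rule inj_onI) (auto simp: insert_ident)
  have "Eb p (Suc N) g = (\<Sum>S\<in>Pow {..<N}. F S) + (\<Sum>S\<in>insert N ` Pow {..<N}. F S)"
    unfolding Eb_def F_def pw by (rule sum.union_disjoint) (use disj in auto)
  also have "(\<Sum>S\<in>insert N ` Pow {..<N}. F S) = (\<Sum>S\<in>Pow {..<N}. F (insert N S))"
    by (rule sum.reindex[OF inj, unfolded comp_def])
  also have "\<dots> = p * Eb p N (\<lambda>k. g (Suc k))"
    unfolding Eb_def sum_distrib_left
  proof (rule sum.cong)
    fix S assume S: "S \<in> Pow {..<N}"
    then have "N \<notin> S" "finite S" by (auto intro: finite_subset)
    then have c: "card (insert N S) = Suc (card S)" by simp
    show "F (insert N S) = p * (p ^ card S * (1 - p) ^ (N - card S) * g (Suc (card S)))"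
      unfolding F_def c by simp
  qed simp
  also have "(\<Sum>S\<in>Pow {..<N}. F S) = (1 - p) * Eb p N g"
    unfolding Eb_def sum_distrib_left
  proof (rule sum.cong)
    fix S assume S: "S \<in> Pow {..<N}"
    then have c: "card S \<le> N" by (rule card_le_N)
    then have "Suc N - card S = Suc (N - card S)" by simp
    then show "F S = (1 - p) * (p ^ card S * (1 - p) ^ (N - card S) * g (card S))"
      unfolding F_def by simp
  qed simp
  finally show ?thesis by simp
qed

lemma Eb_add: "Eb p N (\<lambda>k. f k + g k) = Eb p N f + Eb p N g"
  unfolding Eb_def by (simp add: algebra_simps sum.distrib)

lemma Eb_cmult: "Eb p N (\<lambda>k. c * f k) = c * Eb p N f"
  unfolding Eb_def by (simp add: algebra_simps sum_distrib_left)

lemma Eb_minus: "Eb p N (\<lambda>k. f k - g k) = Eb p N f - Eb p N g"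
  unfolding Eb_def by (simp add: algebra_simps sum_subtractf)

lemma Eb_const: "Eb p N (\<lambda>k. c) = c"
proof (induction N)
  case 0 then show ?case by (simp add: Eb_def)
next
  case (Suc N) then show ?case by (simp add: Eb_Suc algebra_simps)
qed

lemma Eb_mono:
  assumes "0 \<le> p" "p \<le> 1" "\<And>k. k \<le> N \<Longrightarrow> f k \<le> g k"
  shows "Eb p N f \<le> Eb p N g"
  unfolding Eb_def
proof (rule sum_mono)
  fix S assume "S \<in> Pow {..<N}"
  then have "card S \<le> N" by (rule card_le_N)
  then show "p ^ card S * (1 - p) ^ (N - card S) * f (card S) \<le> p ^ card S * (1 - p) ^ (N - card S) * g (card S)"
    using assms by (intro mult_left_mono) auto
qed

definition Mom :: "real \<Rightarrow> nat \<Rightarrow> nat \<Rightarrow> real" where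
  "Mom p N j = Eb p N (\<lambda>k. (real k - real N * p) ^ j)"

lemma Mom_Suc: "Mom p (Suc N) j = p * Eb p N (\<lambda>k. ((real k - real N * p) + (1 - p)) ^ j)
   + (1 - p) * Eb p N (\<lambda>k. ((real k - real N * p) + (- p)) ^ j)"
  unfolding Mom_def Eb_Suc by (simp add: algebra_simps)

lemma Eb_shift2: "Eb p N (\<lambda>k. ((real k - real N * p) + c) ^ 2) = Mom p N 2 + 2 * c * Mom p N 1 + c^2"
proof -
  have "(\<lambda>k. ((real k - real N * p) + c) ^ 2) = (\<lambda>k. (real k - real N * p) ^ 2 + ((2 * c) * (real k - real N * p) ^ 1 + c^2))"
    by (rule ext) (simp add: power2_eq_square algebra_simps)
  then show ?thesis unfolding Mom_def by (simp add: Eb_add Eb_cmult Eb_const)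
qed

lemma Eb_shift4: "Eb p N (\<lambda>k. ((real k - real N * p) + c) ^ 4) = Mom p N 4 + 4 * c * Mom p N 3 + 6 * c^2 * Mom p N 2 + 4 * c^3 * Mom p N 1 + c^4"
proof -
  have "(\<lambda>k. ((real k - real N * p) + c) ^ 4) = (\<lambda>k. (real k - real N * p) ^ 4 + ((4 * c) * (real k - real N * p) ^ 3 + ((6 * c^2) * (real k - real N * p) ^ 2 + ((4 * c^3) * (real k - real N * p) ^ 1 + c^4))))"
    by (rule ext) (simp add: eval_nat_numeral algebra_simps)
  then show ?thesis unfolding Mom_def by (simp only: Eb_add Eb_cmult Eb_const power_one_right)
qed

lemma Mom1: "Mom p N 1 = 0"
proof (induction N)
  case 0 then show ?case by (simp add: Mom_def Eb_def)
next
  case (Suc N)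
  have "Mom p (Suc N) 1 = p * Eb p N (\<lambda>k. (real k - real N * p) ^ 1 + (1 - p))
     + (1 - p) * Eb p N (\<lambda>k. (real k - real N * p) ^ 1 + (- p))"
    unfolding Mom_Suc by simp
  also have "\<dots> = 0" unfolding Eb_add Eb_const Mom_def[symmetric] Suc by (simp add: algebra_simps)
  finally show ?case .
qed

lemma Mom2: "Mom p N 2 = real N * p * (1 - p)"
proof (induction N)
  case 0 then show ?case by (simp add: Mom_def Eb_def)
next
  case (Suc N)
  show ?case unfolding Mom_Suc Eb_shift2 Mom1 Suc by (simp add: algebra_simps power2_eq_square)
qed

lemma Mom4: "Mom p N 4 = 3 * (real N * p * (1 - p))^2 + real N * p * (1 - p) * (1 - 6 * p * (1 - p))"
proof (induction N)
  case 0 then show ?case by (simp add: Mom_def Eb_def)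
next
  case (Suc N)
  show ?case unfolding Mom_Suc Eb_shift4 Mom1 Mom2 Suc by (simp add: algebra_simps eval_nat_numeral)
qed



lemma Eb_cdiv: "Eb p N (\<lambda>k. f k / c) = Eb p N f / c"
  unfolding Eb_def by (simp add: sum_divide_distrib)

lemma ptw1: fixes y t :: real assumes "t > 0" shows "y^2 \<le> t * \<bar>y\<bar> + y^4 / t^2"
proof (cases "\<bar>y\<bar> \<le> t")
  case True
  have "y^2 = \<bar>y\<bar> * \<bar>y\<bar>" by (simp add: power2_eq_square)
  also have "\<dots> \<le> t * \<bar>y\<bar>" using True by (intro mult_right_mono) auto
  finally show ?thesis using assms by (simp add: add_increasing2)
next
  case False
  then have "t^2 \<le> \<bar>y\<bar>^2" using assms by (intro power_mono) auto
  then have "t^2 \<le> y^2" by simp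
  then have "y^2 * t^2 \<le> y^2 * y^2" by (rule mult_left_mono) auto
  moreover have "y^2 * y^2 = y^4" by algebra
  ultimately have "y^2 * t^2 \<le> y^4" by linarith
  then have "y^2 \<le> y^4 / t^2" using assms by (simp add: pos_le_divide_eq)
  then show ?thesis using assms by (simp add: add_increasing)
qed
lemma ptw2: fixes y u :: real assumes "u > 0"
  shows "(if y < 0 then - y else 0) \<le> u * (if y < 0 then 1 else 0) + y^2 / (4 * u)"
proof (cases "y < 0")
  case True
  have "0 \<le> (2 * u + y)^2" by simp
  then have "- y * (4 * u) \<le> u * (4 * u) + y^2" by (simp add: power2_eq_square algebra_simps)
  then have "- y \<le> u + y^2 / (4 * u)" using assms by (simp add: field_simps)
  then show ?thesis using True by simp
qed (use assms in simp)

lemma ptw3: fixes y u :: real assumes "u > 0"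
  shows "(if y > 0 then y else 0) \<le> u * (if y > 0 then 1 else 0) + y^2 / (4 * u)"
  using ptw2[OF assms, of "-y"] by (simp split: if_splits)

lemma anti:
  assumes p: "0 \<le> p" "p \<le> 1" and s1: "real N * p * (1 - p) \<ge> 1"
  shows "Eb p N (\<lambda>k. if real k - real N * p < 0 then 1 else 0) \<ge> 9/1024"
    and "Eb p N (\<lambda>k. if real k - real N * p > 0 then 1 else 0) \<ge> 9/1024"
proof -
  define s where "s = real N * p * (1 - p)"
  define \<sigma> where "\<sigma> = sqrt s"
  have s0: "s \<ge> 1" using s1 s_def by simp
  have sig0: "\<sigma> > 0" using s0 \<sigma>_def by simp
  have ss: "\<sigma>^2 = s" using s0 \<sigma>_def by simp
  define Y where "Y k = real k - real N * p" for k
  have M2: "Eb p N (\<lambda>k. (Y k)^2) = s" using Mom2[of p N] unfolding Mom_def Y_def s_def .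
  have M1: "Eb p N (\<lambda>k. Y k) = 0" using Mom1[of p N] unfolding Mom_def Y_def by simp
  have M4: "Eb p N (\<lambda>k. (Y k)^4) \<le> 4 * s^2"
  proof -
    have "Eb p N (\<lambda>k. (Y k)^4) = 3 * s^2 + s * (1 - 6 * p * (1 - p))"
      using Mom4[of p N] unfolding Mom_def Y_def s_def .
    also have "\<dots> \<le> 3 * s^2 + s" using p s0 by (simp add: mult_nonneg_nonneg)
    also have "\<dots> \<le> 4 * s^2" using s0 by (simp add: power2_eq_square)
    finally show ?thesis .
  qed
  define t where "t = 4 * \<sigma>"
  have t0: "t > 0" using sig0 t_def by simp
  have "s \<le> Eb p N (\<lambda>k. t * \<bar>Y k\<bar> + (Y k)^4 / t^2)"
    unfolding M2[symmetric] by (rule Eb_mono[OF p]) (rule ptw1[OF t0])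
  also have "\<dots> = t * Eb p N (\<lambda>k. \<bar>Y k\<bar>) + Eb p N (\<lambda>k. (Y k)^4) / t^2"
    by (simp only: Eb_add Eb_cmult Eb_cdiv)
  also have "\<dots> \<le> t * Eb p N (\<lambda>k. \<bar>Y k\<bar>) + 4 * s^2 / t^2"
    using M4 t0 by (simp add: divide_right_mono)
  also have "4 * s^2 / t^2 = s / 4"
  proof -
    have "4 * s^2 / t^2 = 4 * (\<sigma>^2 * \<sigma>^2) / (16 * \<sigma>^2)" unfolding t_def ss[symmetric]
      by (simp add: power_mult_distrib power2_eq_square)
    also have "\<dots> = \<sigma>^2 / 4" using sig0 by (simp add: power2_eq_square field_simps)
    finally show ?thesis using ss by simp
  qed
  finally have EA: "3 * s / 4 \<le> t * Eb p N (\<lambda>k. \<bar>Y k\<bar>)" by simp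
  have absY: "Eb p N (\<lambda>k. \<bar>Y k\<bar>) = 2 * Eb p N (\<lambda>k. if Y k < 0 then - Y k else 0)"
  proof -
    have "(\<lambda>k. \<bar>Y k\<bar>) = (\<lambda>k. Y k + 2 * (if Y k < 0 then - Y k else 0))" by (rule ext) auto
    then show ?thesis using M1 by (simp add: Eb_add Eb_cmult)
  qed
  have absY2: "Eb p N (\<lambda>k. \<bar>Y k\<bar>) = 2 * Eb p N (\<lambda>k. if Y k > 0 then Y k else 0)"
  proof -
    have "(\<lambda>k. \<bar>Y k\<bar>) = (\<lambda>k. 2 * (if Y k > 0 then Y k else 0) - Y k)" by (rule ext) auto
    then show ?thesis using M1 by (simp add: Eb_minus Eb_cmult)
  qed
  define u where "u = 16 * \<sigma> / 3"
  have u0: "u > 0" using sig0 u_def by simp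
  have su: "s / (4 * u) = 3 * \<sigma> / 64"
  proof -
    have "s / (4 * u) = 3 * (\<sigma> * \<sigma>) / (64 * \<sigma>)" unfolding u_def ss[symmetric] power2_eq_square
      by simp
    also have "\<dots> = 3 * \<sigma> / 64" using sig0 by simp
    finally show ?thesis .
  qed
  have key: "3 * s / 4 \<le> t * 2 * (u * Eb p N (\<lambda>k. if P k then 1 else 0) + s / (4 * u))"
    if PP: "\<And>k. (if P k then g k else 0) \<le> u * (if P k then 1 else 0) + (Y k)^2 / (4 * u)"
      and ab: "Eb p N (\<lambda>k. \<bar>Y k\<bar>) = 2 * Eb p N (\<lambda>k. if P k then g k else 0)" for P g
  proof -
    have "Eb p N (\<lambda>k. if P k then g k else 0) \<le> Eb p N (\<lambda>k. u * (if P k then 1 else 0) + (Y k)^2 / (4 * u))"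
      by (rule Eb_mono[OF p]) (rule PP)
    also have "\<dots> = u * Eb p N (\<lambda>k. if P k then 1 else 0) + s / (4 * u)"
      by (simp only: Eb_add Eb_cmult Eb_cdiv M2)
    finally have "Eb p N (\<lambda>k. \<bar>Y k\<bar>) \<le> 2 * (u * Eb p N (\<lambda>k. if P k then 1 else 0) + s / (4 * u))"
      using ab by simp
    then have "t * Eb p N (\<lambda>k. \<bar>Y k\<bar>) \<le> t * (2 * (u * Eb p N (\<lambda>k. if P k then 1 else 0) + s / (4 * u)))"
      using t0 by (simp add: mult_left_mono)
    then show ?thesis using EA by (simp only: mult.assoc)
  qed
  have fin: "9/1024 \<le> q" if "3 * s / 4 \<le> t * 2 * (u * q + s / (4 * u))" for q
  proof -
    have "3 * \<sigma>^2 / 4 \<le> 4 * \<sigma> * 2 * (16 * \<sigma> / 3 * q + 3 * \<sigma> / 64)"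
    proof -
      have "3 * s / 4 \<le> t * 2 * (u * q + 3 * \<sigma> / 64)" using that unfolding su .
      then show ?thesis unfolding ss[symmetric] t_def u_def by simp
    qed
    then have "\<sigma>^2 * (3 / 4) \<le> \<sigma>^2 * (128 / 3 * q + 3 / 8)"
      by (simp add: power2_eq_square algebra_simps)
    moreover have "\<sigma>^2 > 0" using sig0 by simp
    ultimately have "3 / 4 \<le> 128 / 3 * q + 3 / 8"
      using mult_le_cancel_left_pos by blast
    then show ?thesis by simp
  qed
  show "Eb p N (\<lambda>k. if real k - real N * p < 0 then 1 else 0) \<ge> 9/1024"
    using fin[OF key[of "\<lambda>k. Y k < 0" "\<lambda>k. - Y k", OF ptw2[OF u0] absY]] unfolding Y_def .
  show "Eb p N (\<lambda>k. if real k - real N * p > 0 then 1 else 0) \<ge> 9/1024"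
    using fin[OF key[of "\<lambda>k. Y k > 0" "\<lambda>k. Y k", OF ptw3[OF u0] absY2]] unfolding Y_def .
qed



lemma win_Acc: "win_prob N \<mu> P (symmetric_profile \<beta>l \<beta>h) Acc w =
   Eb (P h w * \<beta>h + P l w * \<beta>l) N (\<lambda>k. if \<mu> * real N \<le> real k then 1 else 0)"
  unfolding win_prob_def Eb_def
proof (rule sum.cong)
  fix S assume S: "S \<in> Pow {..<N}"
  then have fin: "finite S" "S \<subseteq> {..<N}" by (auto intro: finite_subset)
  then have c: "card ({..<N} - S) = N - card S" by (simp add: card_Diff_subset)
  show "(if (Acc = Acc) = (\<mu> * real N \<le> real (card S))
         then (\<Prod>n\<in>S. vote_A_prob P (symmetric_profile \<beta>l \<beta>h) w n) *
              (\<Prod>n\<in>{..<N} - S. 1 - vote_A_prob P (symmetric_profile \<beta>l \<beta>h) w n)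
         else 0) =
        (P h w * \<beta>h + P l w * \<beta>l) ^ card S * (1 - (P h w * \<beta>h + P l w * \<beta>l)) ^ (N - card S) *
        (if \<mu> * real N \<le> real (card S) then 1 else 0)"
    by (simp add: vote_A_prob_def symmetric_profile_def c)
qed simp

lemma win_Rej: "win_prob N \<mu> P (symmetric_profile \<beta>l \<beta>h) Rej w =
   Eb (P h w * \<beta>h + P l w * \<beta>l) N (\<lambda>k. if \<mu> * real N \<le> real k then 0 else 1)"
  unfolding win_prob_def Eb_def
proof (rule sum.cong)
  fix S assume S: "S \<in> Pow {..<N}"
  then have fin: "finite S" "S \<subseteq> {..<N}" by (auto intro: finite_subset)
  then have c: "card ({..<N} - S) = N - card S" by (simp add: card_Diff_subset)
  show "(if (Rej = Acc) = (\<mu> * real N \<le> real (card S))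
         then (\<Prod>n\<in>S. vote_A_prob P (symmetric_profile \<beta>l \<beta>h) w n) *
              (\<Prod>n\<in>{..<N} - S. 1 - vote_A_prob P (symmetric_profile \<beta>l \<beta>h) w n)
         else 0) =
        (P h w * \<beta>h + P l w * \<beta>l) ^ card S * (1 - (P h w * \<beta>h + P l w * \<beta>l)) ^ (N - card S) *
        (if \<mu> * real N \<le> real (card S) then 0 else 1)"
    by (simp add: vote_A_prob_def symmetric_profile_def c)
qed simp

lemma Eb_real: "Eb p N (\<lambda>k. real k) = real N * p"
proof -
  have "Eb p N (\<lambda>k. real k - real N * p) = 0" using Mom1[of p N] by (simp add: Mom_def)
  then show ?thesis by (simp add: Eb_minus Eb_const)
qed

lemma Eb_ind_bounds:
  assumes "0 \<le> p" "p \<le> 1"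
  shows "0 \<le> Eb p N (\<lambda>k. if Q k then 1 else 0)" "Eb p N (\<lambda>k. if Q k then 1 else 0) \<le> 1"
    "0 \<le> Eb p N (\<lambda>k. if Q k then 0 else 1)" "Eb p N (\<lambda>k. if Q k then 0 else 1) \<le> 1"
proof -
  show "0 \<le> Eb p N (\<lambda>k. if Q k then 1 else 0)"
    using Eb_mono[OF assms, of N "\<lambda>k. 0" "\<lambda>k. if Q k then 1 else 0"] by (simp add: Eb_const)
  show "Eb p N (\<lambda>k. if Q k then 1 else 0) \<le> 1"
    using Eb_mono[OF assms, of N "\<lambda>k. if Q k then 1 else 0" "\<lambda>k. 1"] by (simp add: Eb_const)
  show "0 \<le> Eb p N (\<lambda>k. if Q k then 0 else 1)"
    using Eb_mono[OF assms, of N "\<lambda>k. 0" "\<lambda>k. if Q k then 0 else 1"] by (simp add: Eb_const)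
  show "Eb p N (\<lambda>k. if Q k then 0 else 1) \<le> 1"
    using Eb_mono[OF assms, of N "\<lambda>k. if Q k then 0 else 1" "\<lambda>k. 1"] by (simp add: Eb_const)
qed

lemma sq_ge: fixes x z c :: real assumes "c > 0" "x + c \<le> z" shows "1 \<le> (x - z)^2 / c^2"
proof -
  have "c \<le> \<bar>x - z\<bar>" using assms by simp
  then have "c^2 \<le> \<bar>x - z\<bar>^2" using assms by (intro power_mono) auto
  then have "c^2 \<le> (x - z)^2" by simp
  then show ?thesis using assms by simp
qed

lemma cheb:
  assumes p: "0 \<le> p" "p \<le> 1" and N: "N > 0" and d: "d > 0"
    and pt: "\<And>k. k \<le> N \<Longrightarrow> Q k \<Longrightarrow> real k + d * real N \<le> real N * p \<or> real N * p + d * real N \<le> real k"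
  shows "Eb p N (\<lambda>k. if Q k then 1 else 0) \<le> p * (1 - p) / (d^2 * real N)"
proof -
  have c0: "d * real N > 0" using N d by simp
  have "Eb p N (\<lambda>k. if Q k then 1 else 0) \<le> Eb p N (\<lambda>k. (real k - real N * p)^2 / (d * real N)^2)"
  proof (rule Eb_mono[OF p])
    fix k assume k: "k \<le> N"
    show "(if Q k then 1 else 0) \<le> (real k - real N * p)^2 / (d * real N)^2"
    proof (cases "Q k")
      case True
      from pt[OF k True] show ?thesis
      proof
        assume "real k + d * real N \<le> real N * p"
        from sq_ge[OF c0 this] True show ?thesis by simp
      next
        assume "real N * p + d * real N \<le> real k"
        from sq_ge[OF c0 this] True show ?thesis by (simp add: power2_commute)
      qed
    qed simp
  qed
  also have "\<dots> = real N * p * (1 - p) / (d * real N)^2"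
    using Mom2[of p N] by (simp add: Eb_cdiv Mom_def)
  also have "\<dots> = p * (1 - p) / (d^2 * real N)" using N d by (simp add: power2_eq_square field_simps)
  finally show ?thesis .
qed

lemma ev_big: assumes "(c::real) > 0" shows "eventually (\<lambda>N. real N * c \<ge> 1) sequentially"
  unfolding eventually_sequentially
proof (intro exI allI impI)
  fix N assume "nat \<lceil>1 / c\<rceil> \<le> N"
  then have "1 / c \<le> real N" using real_nat_ceiling_ge[of "1/c"] by linarith
  then show "real N * c \<ge> 1" using assms by (simp add: field_simps)
qed

lemma not_to_1: assumes "eventually (\<lambda>N. A N \<le> 1 - e) sequentially" "(e::real) > 0"
  shows "\<not> (A \<longlonglongrightarrow> 1)"
proof
  assume "A \<longlonglongrightarrow> 1"
  then have "eventually (\<lambda>N. A N > 1 - e) sequentially" using assms(2) by (intro order_tendstoD(1)) auto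
  with assms(1) have "eventually (\<lambda>N. False) sequentially" by eventually_elim auto
  then show False by simp
qed



lemma Eb_compl: "Eb p N (\<lambda>k. if Q k then 0 else 1) = 1 - Eb p N (\<lambda>k. if Q k then 1 else 0)"
proof -
  have "(\<lambda>k. if Q k then 0 else 1) = (\<lambda>k. (1::real) - (if Q k then 1 else 0))" by (rule ext) simp
  then show ?thesis by (simp add: Eb_minus Eb_const)
qed

theorem corollary2:
  fixes Pr :: "state \<Rightarrow> real" and P :: "signal \<Rightarrow> state \<Rightarrow> real"
    and \<mu> \<beta>l \<beta>h :: real
  assumes prior: "Pr L > 0" "Pr H > 0" "Pr L + Pr H = 1"
    and sig: "\<And>s w. P s w \<ge> 0" "\<And>w. P l w + P h w = 1"
    and sigH: "P h H > P h L" "P l H < P l L"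
    and mu: "0 < \<mu>" "\<mu> < 1"
    and beta: "0 \<le> \<beta>l" "\<beta>l \<le> 1" "0 \<le> \<beta>h" "\<beta>h \<le> 1"
  defines "fH \<equiv> P h H * \<beta>h + P l H * \<beta>l - \<mu>"
    and "fL \<equiv> P h L * (1 - \<beta>h) + P l L * (1 - \<beta>l) - (1 - \<mu>)"
    and "A \<equiv> (\<lambda>N. fidelity N \<mu> Pr P (symmetric_profile \<beta>l \<beta>h))"
  shows "(min fH fL > 0 \<longrightarrow> A \<longlonglongrightarrow> 1) \<and> (min fH fL \<le> 0 \<longrightarrow> \<not> (A \<longlonglongrightarrow> 1))"
proof -
  define pH where "pH = P h H * \<beta>h + P l H * \<beta>l"
  define pL where "pL = P h L * \<beta>h + P l L * \<beta>l"
  have p01: "0 \<le> P h w * \<beta>h + P l w * \<beta>l" "P h w * \<beta>h + P l w * \<beta>l \<le> 1" for w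
  proof -
    show "0 \<le> P h w * \<beta>h + P l w * \<beta>l" using sig(1) beta by simp
    have "P h w * \<beta>h \<le> P h w" using sig(1) beta by (simp add: mult_left_le)
    moreover have "P l w * \<beta>l \<le> P l w" using sig(1) beta by (simp add: mult_left_le)
    ultimately show "P h w * \<beta>h + P l w * \<beta>l \<le> 1" using sig(2)[of w] by linarith
  qed
  have pH01: "0 \<le> pH" "pH \<le> 1" using p01[of H] pH_def by auto
  have pL01: "0 \<le> pL" "pL \<le> 1" using p01[of L] pL_def by auto
  have fH: "fH = pH - \<mu>" by (simp add: fH_def pH_def)
  have fL: "fL = \<mu> - pL" using sig(2)[of L] by (simp add: fL_def pL_def algebra_simps)
  define RL where "RL N = Eb pL N (\<lambda>k. if \<mu> * real N \<le> real k then 0 else 1)" for N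
  define AH where "AH N = Eb pH N (\<lambda>k. if \<mu> * real N \<le> real k then 1 else 0)" for N
  have AN: "A N = Pr L * RL N + Pr H * AH N" for N
    unfolding A_def fidelity_def win_Acc win_Rej pH_def pL_def RL_def AH_def ..
  have RL1: "0 \<le> RL N" "RL N \<le> 1" for N unfolding RL_def using Eb_ind_bounds[OF pL01] by auto
  have AH1: "0 \<le> AH N" "AH N \<le> 1" for N unfolding AH_def using Eb_ind_bounds[OF pH01] by auto
  have Ale1: "A N \<le> 1" for N
  proof -
    have "Pr L * RL N \<le> Pr L" using RL1[of N] prior by (simp add: mult_left_le)
    moreover have "Pr H * AH N \<le> Pr H" using AH1[of N] prior by (simp add: mult_left_le)
    ultimately show ?thesis using AN[of N] prior by linarith
  qed
  have part1: "A \<longlonglongrightarrow> 1" if pos: "min fH fL > 0"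
  proof -
    have lt: "\<mu> < pH" "pL < \<mu>" using pos fH fL by auto
    define KL where "KL = pL * (1 - pL) / (\<mu> - pL)^2"
    define KH where "KH = pH * (1 - pH) / (pH - \<mu>)^2"
    define g where "g N = 1 - (Pr L * KL + Pr H * KH) / real N" for N
    have g: "g \<longlonglongrightarrow> 1"
      unfolding g_def using tendsto_diff[OF tendsto_const lim_const_over_n, of 1 "Pr L * KL + Pr H * KH"]
      by simp
    have low: "g N \<le> A N" if N: "N > 0" for N
    proof -
      have L: "Eb pL N (\<lambda>k. if \<mu> * real N \<le> real k then 1 else 0) \<le> KL / real N"
      proof -
        have "Eb pL N (\<lambda>k. if \<mu> * real N \<le> real k then 1 else 0) \<le> pL * (1 - pL) / ((\<mu> - pL)^2 * real N)"
        proof (rule cheb[OF pL01 N])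
          show "\<mu> - pL > 0" using lt by simp
          fix k assume "k \<le> N" "\<mu> * real N \<le> real k"
          then show "real k + (\<mu> - pL) * real N \<le> real N * pL \<or> real N * pL + (\<mu> - pL) * real N \<le> real k"
            by (simp add: algebra_simps)
        qed
        then show ?thesis by (simp add: KL_def)
      qed
      have H: "Eb pH N (\<lambda>k. if \<not> \<mu> * real N \<le> real k then 1 else 0) \<le> KH / real N"
      proof -
        have "Eb pH N (\<lambda>k. if \<not> \<mu> * real N \<le> real k then 1 else 0) \<le> pH * (1 - pH) / ((pH - \<mu>)^2 * real N)"
        proof (rule cheb[OF pH01 N])
          show "pH - \<mu> > 0" using lt by simp
          fix k assume "k \<le> N" "\<not> \<mu> * real N \<le> real k"
          then show "real k + (pH - \<mu>) * real N \<le> real N * pH \<or> real N * pH + (pH - \<mu>) * real N \<le> real k"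
            by (simp add: algebra_simps)
        qed
        then show ?thesis by (simp add: KH_def)
      qed
      have RLe: "RL N \<ge> 1 - KL / real N" using L unfolding RL_def Eb_compl by simp
      have AHe: "AH N \<ge> 1 - KH / real N"
      proof -
        have "AH N = Eb pH N (\<lambda>k. if \<not> \<mu> * real N \<le> real k then 0 else 1)"
          unfolding AH_def by (rule arg_cong[where f="Eb pH N"]) auto
        also have "\<dots> = 1 - Eb pH N (\<lambda>k. if \<not> \<mu> * real N \<le> real k then 1 else 0)"
          by (rule Eb_compl)
        finally have "AH N = 1 - Eb pH N (\<lambda>k. if \<not> \<mu> * real N \<le> real k then 1 else 0)" .
        then show ?thesis using H by simp
      qed
      have "Pr L * (1 - KL / real N) \<le> Pr L * RL N" using RLe prior by (simp add: mult_left_mono)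
      moreover have "Pr H * (1 - KH / real N) \<le> Pr H * AH N" using AHe prior by (simp add: mult_left_mono)
      moreover have "g N = Pr L * (1 - KL / real N) + Pr H * (1 - KH / real N)"
        unfolding g_def using prior(3) by (simp add: algebra_simps add_divide_distrib)
      ultimately show ?thesis using AN[of N] by linarith
    qed
    show ?thesis
    proof (rule tendsto_sandwich[OF _ _ g tendsto_const])
      show "eventually (\<lambda>N. g N \<le> A N) sequentially"
        using eventually_gt_at_top[of 0] by eventually_elim (rule low)
      show "eventually (\<lambda>N. A N \<le> 1) sequentially" using Ale1 by simp
    qed
  qed
  have part2: "\<not> (A \<longlonglongrightarrow> 1)" if npos: "min fH fL \<le> 0"
  proof -
    have "pH \<le> \<mu> \<or> \<mu> \<le> pL" using npos fH fL by linarith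
    then show ?thesis
    proof
      assume le: "pH \<le> \<mu>"
      have evAH: "eventually (\<lambda>N. AH N \<le> 1 - 9/1024) sequentially"
      proof (cases "pH = 0")
        case True
        show ?thesis using eventually_gt_at_top[of 0]
        proof eventually_elim
          case (elim N)
          have "AH N \<le> Eb pH N (\<lambda>k. real k / (\<mu> * real N))"
            unfolding AH_def
          proof (rule Eb_mono[OF pH01])
            fix k assume "k \<le> N"
            show "(if \<mu> * real N \<le> real k then 1 else 0) \<le> real k / (\<mu> * real N)"
              using elim mu by (simp add: pos_le_divide_eq)
          qed
          also have "\<dots> = 0" by (simp add: Eb_cdiv Eb_real True)
          finally show ?case by simp
        qed
      next
        case False
        then have c: "pH * (1 - pH) > 0" using pH01 le mu by simp
        show ?thesis using ev_big[OF c]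
        proof eventually_elim
          case (elim N)
          have "AH N \<le> Eb pH N (\<lambda>k. 1 - (if real k - real N * pH < 0 then 1 else 0))"
            unfolding AH_def
          proof (rule Eb_mono[OF pH01])
            fix k assume "k \<le> N"
            have "real N * pH \<le> real N * \<mu>" using le by (intro mult_left_mono) auto
            then have "real N * pH \<le> \<mu> * real N" by (simp add: mult.commute)
            then show "(if \<mu> * real N \<le> real k then 1 else 0) \<le> 1 - (if real k - real N * pH < 0 then 1 else (0::real))"
              by auto
          qed
          also have "\<dots> = 1 - Eb pH N (\<lambda>k. if real k - real N * pH < 0 then 1 else 0)"
            by (simp add: Eb_minus Eb_const)
          also have "\<dots> \<le> 1 - 9/1024" using anti(1)[OF pH01, of N] elim by (simp add: mult.assoc)
          finally show ?case .
        qed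
      qed
      show ?thesis
      proof (rule not_to_1)
        show "Pr H * (9/1024) > 0" using prior by simp
        show "eventually (\<lambda>N. A N \<le> 1 - Pr H * (9/1024)) sequentially" using evAH
        proof eventually_elim
          case (elim N)
          have "Pr L * RL N \<le> Pr L" using RL1[of N] prior by (simp add: mult_left_le)
          moreover have "Pr H * AH N \<le> Pr H * (1 - 9/1024)" using elim prior by (intro mult_left_mono) auto
          moreover have "Pr H * (1 - 9/1024) = Pr H - Pr H * (9/1024)" by (simp add: algebra_simps)
          ultimately show ?case using AN[of N] prior(3) by linarith
        qed
      qed
    next
      assume le: "\<mu> \<le> pL"
      have evRL: "eventually (\<lambda>N. RL N \<le> 1 - 9/1024) sequentially"
      proof (cases "pL = 1")
        case True
        show ?thesis using eventually_gt_at_top[of 0]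
        proof eventually_elim
          case (elim N)
          have "RL N \<le> Eb pL N (\<lambda>k. (real N - real k) / ((1 - \<mu>) * real N))"
            unfolding RL_def
          proof (rule Eb_mono[OF pL01])
            fix k assume k: "k \<le> N"
            show "(if \<mu> * real N \<le> real k then 0 else 1) \<le> (real N - real k) / ((1 - \<mu>) * real N)"
              using elim mu k by (simp add: pos_le_divide_eq algebra_simps)
          qed
          also have "\<dots> = 0" by (simp add: Eb_cdiv Eb_real Eb_minus Eb_const True)
          finally show ?case by simp
        qed
      next
        case False
        then have c: "pL * (1 - pL) > 0" using pL01 le mu by simp
        show ?thesis using ev_big[OF c]
        proof eventually_elim
          case (elim N)
          have "RL N \<le> Eb pL N (\<lambda>k. 1 - (if real k - real N * pL > 0 then 1 else 0))"
            unfolding RL_def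
          proof (rule Eb_mono[OF pL01])
            fix k assume "k \<le> N"
            have "real N * \<mu> \<le> real N * pL" using le by (intro mult_left_mono) auto
            then have "\<mu> * real N \<le> real N * pL" by (simp add: mult.commute)
            then show "(if \<mu> * real N \<le> real k then 0 else 1) \<le> 1 - (if real k - real N * pL > 0 then 1 else (0::real))"
              by auto
          qed
          also have "\<dots> = 1 - Eb pL N (\<lambda>k. if real k - real N * pL > 0 then 1 else 0)"
            by (simp add: Eb_minus Eb_const)
          also have "\<dots> \<le> 1 - 9/1024" using anti(2)[OF pL01, of N] elim by (simp add: mult.assoc)
          finally show ?case .
        qed
      qed
      show ?thesis
      proof (rule not_to_1)
        show "Pr L * (9/1024) > 0" using prior by simp
        show "eventually (\<lambda>N. A N \<le> 1 - Pr L * (9/1024)) sequentially" using evRL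
        proof eventually_elim
          case (elim N)
          have "Pr H * AH N \<le> Pr H" using AH1[of N] prior by (simp add: mult_left_le)
          moreover have "Pr L * RL N \<le> Pr L * (1 - 9/1024)" using elim prior by (intro mult_left_mono) auto
          moreover have "Pr L * (1 - 9/1024) = Pr L - Pr L * (9/1024)" by (simp add: algebra_simps)
          ultimately show ?case using AN[of N] prior(3) by linarith
        qed
      qed
    qed
  qed
  show ?thesis using part1 part2 by blast
qed


end
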